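(* In the pre-cylinder category $\mathcal C^\Delta_0$, for every $n\ge 1$ and $0\le k\le n$, the horn inclusion $\Lambda^n_k\hookrightarrow\Delta_n$ is a trivial cofibration (a monomorphism which belongs to the class of weak equivalences).
   Context: Let $\Delta$ denote the semi-simplicial category: objects the finite nonempty ordinals $[n]=\{0,\dots,n\}$, morphisms the injective order-preserving maps. A finite semi-simplicial set is a presheaf on $\Delta$ with finitely many simplices in total. $\mathcal C^\Delta_0$ is the category of finite semi-simplicial sets, with monomorphisms as cofibrations and with weak equivalences the smallest class $W$ of morphisms which contains all morphisms between representable presheaves $\Delta_m\to\Delta_n$ and makes $\mathcal C^\Delta_0$ a pre-cylinder category, i.e. $W$ contains isomorphisms, is closed under composition, satisfies 2-out-of-6 (if $f,g,h$ are composable with $f\circ g,g\circ h\in W$ then $f,g,h,f\circ g\circ h\in W$), and satisfies the cube lemma (given a natural transformation between spans $B\leftarrow A\to C$ and $B'\leftarrow A'\to C'$ with $A\to B$, $A'\to B'$ monomorphisms and the three components in $W$, the induced map $B\sqcup_AC\to B'\sqcup_{A'}C'$ is in $W$). Here $\Delta_n$ is the representable on $[n]$; $\Lambda^n_k\subset\Delta_n$ is the sub-presheaf of maps $f:[v]\to[n]$ whose image avoids at least one value different from $k$. *)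

theory Defs
  imports Main
begin

text \<open>Morphisms [m] -> [n] of the semi-simplicial category (injective order-preserving
maps) are encoded as strictly increasing lists f of length m+1 with entries in {0..n};
f ! i is the image of i.  Simplices of the finite semi-simplicial sets are taken in the
countably infinite type nat list (every finite semi-simplicial set is isomorphic to one
of these).\<close>

definition inj_mono :: "nat \<Rightarrow> nat \<Rightarrow> nat list \<Rightarrow> bool" where
  "inj_mono m n f \<longleftrightarrow> length f = Suc m \<and> sorted_wrt (<) f \<and> (\<forall>i\<in>set f. i \<le> n)"

definition dcomp :: "nat list \<Rightarrow> nat list \<Rightarrow> nat list" where
  "dcomp g f = map ((!) g) f"

definition did :: "nat \<Rightarrow> nat list" where
  "did n = [0..<Suc n]"

text \<open>A semi-simplicial set: simplices of each dimension and the action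
Face X m n f : X_n -> X_m of f : [m] -> [n] (extensional: undefined off its domain).\<close>
record 'a sss =
  Simp :: "nat \<Rightarrow> 'a set"
  Face :: "nat \<Rightarrow> nat \<Rightarrow> nat list \<Rightarrow> 'a \<Rightarrow> 'a"

type_synonym ss = "nat list sss"
type_synonym shom = "nat \<Rightarrow> nat list \<Rightarrow> nat list"
type_synonym sarrow = "ss \<times> ss \<times> shom"

text \<open>Finite semi-simplicial sets (objects of C^Delta_0).\<close>
definition fsss :: "ss \<Rightarrow> bool" where
  "fsss X \<longleftrightarrow>
     (\<forall>m n f x. inj_mono m n f \<and> x \<in> Simp X n \<longrightarrow> Face X m n f x \<in> Simp X m) \<and>
     (\<forall>m n f x. \<not> (inj_mono m n f \<and> x \<in> Simp X n) \<longrightarrow> Face X m n f x = undefined) \<and>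
     (\<forall>n x. x \<in> Simp X n \<longrightarrow> Face X n n (did n) x = x) \<and>
     (\<forall>m n p f g x. inj_mono m n f \<and> inj_mono n p g \<and> x \<in> Simp X p \<longrightarrow>
        Face X m p (dcomp g f) x = Face X m n f (Face X n p g x)) \<and>
     finite (SIGMA n:UNIV. Simp X n)"

definition shom :: "ss \<Rightarrow> ss \<Rightarrow> shom \<Rightarrow> bool" where
  "shom X Y g \<longleftrightarrow>
     (\<forall>n x. x \<in> Simp X n \<longrightarrow> g n x \<in> Simp Y n) \<and>
     (\<forall>n x. x \<notin> Simp X n \<longrightarrow> g n x = undefined) \<and>
     (\<forall>m n f x. inj_mono m n f \<and> x \<in> Simp X n \<longrightarrow>
        g m (Face X m n f x) = Face Y m n f (g n x))"

definition arrows :: "sarrow set" where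
  "arrows = {(X, Y, g). fsss X \<and> fsss Y \<and> shom X Y g}"

definition cmp :: "ss \<Rightarrow> shom \<Rightarrow> shom \<Rightarrow> shom" where
  "cmp X g h = (\<lambda>n x. if x \<in> Simp X n then h n (g n x) else undefined)"

definition idm :: "ss \<Rightarrow> shom" where
  "idm X = (\<lambda>n x. if x \<in> Simp X n then x else undefined)"

definition is_iso :: "ss \<Rightarrow> ss \<Rightarrow> shom \<Rightarrow> bool" where
  "is_iso X Y g \<longleftrightarrow> shom X Y g \<and>
     (\<exists>g'. shom Y X g' \<and> cmp X g g' = idm X \<and> cmp Y g' g = idm Y)"

definition is_mono :: "ss \<Rightarrow> ss \<Rightarrow> shom \<Rightarrow> bool" where
  "is_mono X Y g \<longleftrightarrow> shom X Y g \<and>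
     (\<forall>T u v. fsss T \<and> shom T X u \<and> shom T X v \<and> cmp T u g = cmp T v g \<longrightarrow> u = v)"

definition is_pushout :: "ss \<Rightarrow> ss \<Rightarrow> ss \<Rightarrow> shom \<Rightarrow> shom \<Rightarrow> ss \<Rightarrow> shom \<Rightarrow> shom \<Rightarrow> bool" where
  "is_pushout A B C f g P i j \<longleftrightarrow>
     fsss P \<and> shom B P i \<and> shom C P j \<and> cmp A f i = cmp A g j \<and>
     (\<forall>Q u v. fsss Q \<and> shom B Q u \<and> shom C Q v \<and> cmp A f u = cmp A g v \<longrightarrow>
        (\<exists>!w. shom P Q w \<and> cmp B i w = u \<and> cmp C j w = v))"

text \<open>W makes C^Delta_0 (with monos as cofibrations) a pre-cylinder category.\<close>
definition precyl_W :: "sarrow set \<Rightarrow> bool" where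
  "precyl_W W \<longleftrightarrow>
     W \<subseteq> arrows \<and>
     (\<forall>X Y g. fsss X \<and> fsss Y \<and> is_iso X Y g \<longrightarrow> (X, Y, g) \<in> W) \<and>
     (\<forall>X Y Z g h. (X, Y, g) \<in> W \<and> (Y, Z, h) \<in> W \<longrightarrow> (X, Z, cmp X g h) \<in> W) \<and>
     (\<forall>X0 X1 X2 X3 h g f.
        (X0, X1, h) \<in> arrows \<and> (X1, X2, g) \<in> arrows \<and> (X2, X3, f) \<in> arrows \<and>
        (X0, X2, cmp X0 h g) \<in> W \<and> (X1, X3, cmp X1 g f) \<in> W \<longrightarrow>
        (X0, X1, h) \<in> W \<and> (X1, X2, g) \<in> W \<and> (X2, X3, f) \<in> W \<and>
        (X0, X3, cmp X0 (cmp X0 h g) f) \<in> W) \<and>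
     (\<forall>A B C f g A' B' C' f' g' a b c P i j P' i' j' p.
        fsss A \<and> fsss B \<and> fsss C \<and> fsss A' \<and> fsss B' \<and> fsss C' \<and>
        is_mono A B f \<and> shom A C g \<and> is_mono A' B' f' \<and> shom A' C' g' \<and>
        (A, A', a) \<in> W \<and> (B, B', b) \<in> W \<and> (C, C', c) \<in> W \<and>
        cmp A f b = cmp A a f' \<and> cmp A g c = cmp A a g' \<and>
        is_pushout A B C f g P i j \<and> is_pushout A' B' C' f' g' P' i' j' \<and>
        shom P P' p \<and> cmp B i p = cmp B b i' \<and> cmp C j p = cmp C c j' \<longrightarrow>
        (P, P', p) \<in> W)"

definition Delta :: "nat \<Rightarrow> ss" where
  "Delta n = \<lparr> Simp = (\<lambda>v. {x. inj_mono v n x}),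
     Face = (\<lambda>m v f x. if inj_mono m v f \<and> inj_mono v n x then dcomp x f else undefined) \<rparr>"

definition horn_simp :: "nat \<Rightarrow> nat \<Rightarrow> nat \<Rightarrow> nat list set" where
  "horn_simp n k v = {x. inj_mono v n x \<and> (\<exists>j\<le>n. j \<noteq> k \<and> j \<notin> set x)}"

definition Horn :: "nat \<Rightarrow> nat \<Rightarrow> ss" where
  "Horn n k = \<lparr> Simp = horn_simp n k,
     Face = (\<lambda>m v f x. if inj_mono m v f \<and> x \<in> horn_simp n k v then dcomp x f else undefined) \<rparr>"

definition horn_incl :: "nat \<Rightarrow> nat \<Rightarrow> shom" where
  "horn_incl n k = idm (Horn n k)"

definition W0 :: "sarrow set" where
  "W0 = \<Inter> {W. precyl_W W \<and> {(Delta m, Delta n, g) | m n g. shom (Delta m) (Delta n) g} \<subseteq> W}"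

end

theory Submission
  imports Defs
begin

lemma inj_mono_lt: "inj_mono m v f \<Longrightarrow> i \<in> set f \<Longrightarrow> i < Suc v"
  unfolding inj_mono_def by auto

lemma inj_mono_comp:
  assumes "inj_mono m v f" "inj_mono v n x"
  shows "inj_mono m n (dcomp x f)"
proof -
  have len: "length x = Suc v" "length f = Suc m" using assms unfolding inj_mono_def by auto
  have sx: "sorted_wrt (<) x" and sf: "sorted_wrt (<) f" using assms unfolding inj_mono_def by auto
  have lt: "\<forall>i\<in>set f. i < length x" using inj_mono_lt[OF assms(1)] len by auto
  have "sorted_wrt (\<lambda>a b. x ! a < x ! b) f"
    using sf lt sx
    by (auto simp: sorted_wrt_iff_nth_less)
  moreover have "\<forall>i\<in>set (dcomp x f). i \<le> n"
    using assms lt unfolding inj_mono_def dcomp_def by auto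
  ultimately show ?thesis using len unfolding inj_mono_def dcomp_def
    by (simp add: sorted_wrt_map)
qed

lemma dcomp_assoc:
  assumes "inj_mono m v f" "inj_mono v p g"
  shows "dcomp x (dcomp g f) = dcomp (dcomp x g) f"
proof -
  have "\<forall>i\<in>set f. i < length g" using assms inj_mono_lt unfolding inj_mono_def by fastforce
  thus ?thesis unfolding dcomp_def by auto
qed

lemma dcomp_did: "length x = Suc v \<Longrightarrow> dcomp x (did v) = x"
  unfolding dcomp_def did_def by (metis map_nth upt_conv_Cons zero_less_Suc)

lemma inj_mono_did: "inj_mono v v (did v)"
  unfolding inj_mono_def did_def by (simp del: upt_Suc)

lemma inj_mono_le: "inj_mono v n x \<Longrightarrow> v \<le> n"
proof -
  assume a: "inj_mono v n x"
  hence "distinct x" "set x \<subseteq> {..n}" "length x = Suc v"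
    unfolding inj_mono_def by (auto simp: strict_sorted_iff)
  hence "Suc v \<le> card {..n}" by (metis card_mono distinct_card finite_atMost)
  thus ?thesis by simp
qed

definition subcx :: "nat \<Rightarrow> (nat \<Rightarrow> nat list set) \<Rightarrow> bool" where
  "subcx n K \<longleftrightarrow> (\<forall>v x. x \<in> K v \<longrightarrow> inj_mono v n x) \<and>
     (\<forall>m v f x. x \<in> K v \<and> inj_mono m v f \<longrightarrow> dcomp x f \<in> K m)"

definition sub :: "(nat \<Rightarrow> nat list set) \<Rightarrow> ss" where
  "sub K = \<lparr>Simp = K, Face = (\<lambda>m v f x. if inj_mono m v f \<and> x \<in> K v then dcomp x f else undefined)\<rparr>"

lemma Simp_sub[simp]: "Simp (sub K) = K" by (simp add: sub_def)
lemma Face_sub: "Face (sub K) = (\<lambda>m v f x. if inj_mono m v f \<and> x \<in> K v then dcomp x f else undefined)"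
  by (simp add: sub_def)

lemma fsss_sub:
  assumes "subcx n K" shows "fsss (sub K)"
proof -
  have fin: "finite (SIGMA v:UNIV. K v)"
  proof (rule finite_subset)
    show "(SIGMA v:UNIV. K v) \<subseteq> (SIGMA v:{..n}. {xs. set xs \<subseteq> {..n} \<and> length xs = Suc v})"
      using assms inj_mono_le unfolding subcx_def inj_mono_def by fastforce
    show "finite (SIGMA v:{..n}. {xs. set xs \<subseteq> {..n} \<and> length xs = Suc v})"
      by (intro finite_SigmaI finite_lists_length_eq) auto
  qed
  have A: "\<forall>v x. x \<in> K v \<longrightarrow> inj_mono v n x" and
    B: "\<forall>m v f x. x \<in> K v \<and> inj_mono m v f \<longrightarrow> dcomp x f \<in> K m"
    using assms unfolding subcx_def by auto
  have C: "dcomp x (dcomp g f) = dcomp (dcomp x g) f \<and> dcomp x g \<in> K v \<and> inj_mono m p (dcomp g f)"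
    if "inj_mono m v f" "inj_mono v p g" "x \<in> K p" for m v p f g x
    using that A B dcomp_assoc inj_mono_comp by blast
  show ?thesis unfolding fsss_def Simp_sub Face_sub
  proof (intro conjI allI impI)
    fix m v f x assume "inj_mono m v f \<and> x \<in> K v" thus "(if inj_mono m v f \<and> x \<in> K v then dcomp x f else undefined) \<in> K m"
      using B by auto
  next
    fix m v f x assume "\<not> (inj_mono m v f \<and> x \<in> K v)"
    thus "(if inj_mono m v f \<and> x \<in> K v then dcomp x f else undefined) = undefined" by auto
  next
    fix v x assume "x \<in> K v"
    moreover hence "length x = Suc v" using A unfolding inj_mono_def by auto
    ultimately show "(if inj_mono v v (did v) \<and> x \<in> K v then dcomp x (did v) else undefined) = x"
      by (simp add: inj_mono_did dcomp_did)
  next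
    fix m v p f g x assume a: "inj_mono m v f \<and> inj_mono v p g \<and> x \<in> K p"
    show "(if inj_mono m p (dcomp g f) \<and> x \<in> K p then dcomp x (dcomp g f) else undefined) =
       (if inj_mono m v f \<and> (if inj_mono v p g \<and> x \<in> K p then dcomp x g else undefined) \<in> K v
        then dcomp (if inj_mono v p g \<and> x \<in> K p then dcomp x g else undefined) f else undefined)"
      using C[of m v f p g x] a by simp
  next
    show "finite (SIGMA n:UNIV. K n)" using fin .
  qed
qed


lemma subcxD1: "subcx n K \<Longrightarrow> x \<in> K v \<Longrightarrow> inj_mono v n x"
  unfolding subcx_def by blast
lemma subcxD2: "subcx n K \<Longrightarrow> x \<in> K v \<Longrightarrow> inj_mono m v f \<Longrightarrow> dcomp x f \<in> K m"
  unfolding subcx_def by blast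

lemma idm_sub: "idm (sub K) = (\<lambda>v x. if x \<in> K v then x else undefined)"
  unfolding idm_def by simp

lemma shom_idm_sub:
  assumes "subcx n K" "\<And>v. K v \<subseteq> L v"
  shows "shom (sub K) (sub L) (idm (sub K))"
  unfolding shom_def idm_sub Face_sub using assms subcxD2[OF assms(1)] by auto

lemma cmp_idm_sub:
  assumes "\<And>v. K v \<subseteq> L v"
  shows "cmp (sub K) (idm (sub K)) (idm (sub L)) = idm (sub K)"
  unfolding cmp_def idm_sub using assms by (auto intro!: ext) blast

lemma is_mono_idm_sub:
  assumes "subcx n K" "\<And>v. K v \<subseteq> L v"
  shows "is_mono (sub K) (sub L) (idm (sub K))"
  unfolding is_mono_def
proof (intro conjI allI impI)
  show "shom (sub K) (sub L) (idm (sub K))" using shom_idm_sub[OF assms] .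
next
  fix T u v assume a: "fsss T \<and> shom T (sub K) u \<and> shom T (sub K) v \<and>
     cmp T u (idm (sub K)) = cmp T v (idm (sub K))"
  show "u = v"
  proof (intro ext)
    fix m x
    show "u m x = v m x"
    proof (cases "x \<in> Simp T m")
      case True
      have "cmp T u (idm (sub K)) m x = cmp T v (idm (sub K)) m x" using a by simp
      moreover have "u m x \<in> K m" "v m x \<in> K m" using a True unfolding shom_def by auto
      ultimately show ?thesis using True unfolding cmp_def idm_sub by simp
    next
      case False thus ?thesis using a unfolding shom_def by auto
    qed
  qed
qed

lemma shom_idm: "fsss X \<Longrightarrow> shom X X (idm X)"
  unfolding shom_def idm_def fsss_def by auto

lemma cmp_idm_left: "shom X Y a \<Longrightarrow> cmp X (idm X) a = a"
  unfolding shom_def idm_def cmp_def by (auto intro!: ext)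

lemma cmp_idm_right: "shom X Y b \<Longrightarrow> cmp X b (idm Y) = b"
  unfolding shom_def idm_def cmp_def by (auto intro!: ext)

lemma is_iso_idm: "fsss X \<Longrightarrow> is_iso X X (idm X)"
  unfolding is_iso_def using shom_idm cmp_idm_left by metis

lemma pushout_sub:
  assumes sA: "subcx n A" and sB: "subcx n B" and sC: "subcx n C" and sP: "subcx n P"
    and AI: "\<And>v. A v = B v \<inter> C v" and PU: "\<And>v. P v = B v \<union> C v"
  shows "is_pushout (sub A) (sub B) (sub C) (idm (sub A)) (idm (sub A)) (sub P)
           (idm (sub B)) (idm (sub C))"
  unfolding is_pushout_def
proof (intro conjI allI impI)
  show "fsss (sub P)" using fsss_sub[OF sP] .
  show "shom (sub B) (sub P) (idm (sub B))" using shom_idm_sub[OF sB] PU by auto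
  show "shom (sub C) (sub P) (idm (sub C))" using shom_idm_sub[OF sC] PU by auto
  show "cmp (sub A) (idm (sub A)) (idm (sub B)) = cmp (sub A) (idm (sub A)) (idm (sub C))"
    using cmp_idm_sub[of A B] cmp_idm_sub[of A C] AI by auto
next
  fix Q u v
  assume a: "fsss Q \<and> shom (sub B) Q u \<and> shom (sub C) Q v \<and>
     cmp (sub A) (idm (sub A)) u = cmp (sub A) (idm (sub A)) v"
  have su: "shom (sub B) Q u" and sv: "shom (sub C) Q v" using a by auto
  have agree: "u m x = v m x" if "x \<in> A m" for m x
  proof -
    have "cmp (sub A) (idm (sub A)) u m x = cmp (sub A) (idm (sub A)) v m x" using a by simp
    thus ?thesis using that unfolding cmp_def idm_sub by simp
  qed
  define w where "w = (\<lambda>m x. if x \<in> B m then u m x else if x \<in> C m then v m x else undefined)"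
  have uext: "u m x = undefined" if "x \<notin> B m" for m x using su that unfolding shom_def by auto
  have vext: "v m x = undefined" if "x \<notin> C m" for m x using sv that unfolding shom_def by auto
  have sw: "shom (sub P) Q w"
    unfolding shom_def Simp_sub Face_sub
  proof (intro conjI allI impI)
    fix m x assume "x \<in> P m" thus "w m x \<in> Simp Q m"
      using su sv PU unfolding w_def shom_def by auto
  next
    fix m x assume "x \<notin> P m" thus "w m x = undefined" using PU unfolding w_def by auto
  next
    fix m v' f x assume b: "inj_mono m v' f \<and> x \<in> P v'"
    show "w m (if inj_mono m v' f \<and> x \<in> P v' then dcomp x f else undefined) = Face Q m v' f (w v' x)"
    proof (cases "x \<in> B v'")
      case True
      have "dcomp x f \<in> B m" using subcxD2[OF sB True] b by auto
      moreover have "u m (Face (sub B) m v' f x) = Face Q m v' f (u v' x)"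
        using su b True unfolding shom_def by auto
      ultimately show ?thesis using b True unfolding w_def Face_sub by simp
    next
      case False
      hence xC: "x \<in> C v'" using b PU by auto
      have dC: "dcomp x f \<in> C m" using subcxD2[OF sC xC] b by auto
      have "v m (Face (sub C) m v' f x) = Face Q m v' f (v v' x)"
        using sv b xC unfolding shom_def by auto
      hence e: "v m (dcomp x f) = Face Q m v' f (v v' x)" using b xC unfolding Face_sub by simp
      show ?thesis
      proof (cases "dcomp x f \<in> B m")
        case True
        hence "dcomp x f \<in> A m" using AI dC by auto
        thus ?thesis using e agree[of "dcomp x f" m] b False xC True unfolding w_def by simp
      next
        case F2: False
        thus ?thesis using e b False xC dC unfolding w_def by simp
      qed
    qed
  qed
  have cB: "cmp (sub B) (idm (sub B)) w = u"
    unfolding cmp_def idm_sub w_def by (auto intro!: ext simp: uext)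
  have cC: "cmp (sub C) (idm (sub C)) w = v"
  proof (intro ext)
    fix m x show "cmp (sub C) (idm (sub C)) w m x = v m x"
      unfolding cmp_def idm_sub w_def using agree[of x m] AI[of m] vext[of x m] by auto
  qed
  show "\<exists>!w. shom (sub P) Q w \<and> cmp (sub B) (idm (sub B)) w = u \<and> cmp (sub C) (idm (sub C)) w = v"
  proof (rule ex1I[of _ w])
    show "shom (sub P) Q w \<and> cmp (sub B) (idm (sub B)) w = u \<and> cmp (sub C) (idm (sub C)) w = v"
      using sw cB cC by auto
  next
    fix w' assume b: "shom (sub P) Q w' \<and> cmp (sub B) (idm (sub B)) w' = u \<and> cmp (sub C) (idm (sub C)) w' = v"
    show "w' = w"
    proof (intro ext)
      fix m x
      have 1: "cmp (sub B) (idm (sub B)) w' m x = u m x" "cmp (sub C) (idm (sub C)) w' m x = v m x"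
        using b by auto
      have 2: "x \<notin> P m \<Longrightarrow> w' m x = undefined" using b unfolding shom_def by auto
      show "w' m x = w m x" using 1 2 PU[of m] unfolding cmp_def idm_sub w_def
        by (auto split: if_splits)
    qed
  qed
qed


lemma shom_sub_widen:
  assumes "shom (sub K) (sub L) g" "\<And>v. L v \<subseteq> M v"
  shows "shom (sub K) (sub M) g"
  using assms unfolding shom_def Face_sub by (auto; blast)

definition D :: "nat \<Rightarrow> nat \<Rightarrow> nat list set" where
  "D n v = {x. inj_mono v n x}"

definition F :: "nat \<Rightarrow> nat set \<Rightarrow> nat \<Rightarrow> nat list set" where
  "F n S v = {x. inj_mono v n x \<and> set x \<subseteq> S}"

lemma Delta_sub: "Delta n = sub (D n)"
  unfolding Delta_def sub_def D_def by (auto intro!: ext)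

lemma D_F: "D n = F n {..n}"
  unfolding D_def F_def inj_mono_def by (auto intro!: ext)

lemma subcx_D: "subcx n (D n)"
  unfolding subcx_def D_def using inj_mono_comp by auto

lemma subcx_F: "subcx n (F n S)"
  unfolding subcx_def F_def dcomp_def
proof (intro conjI allI impI)
  fix m v f x assume a: "x \<in> {x. inj_mono v n x \<and> set x \<subseteq> S} \<and> inj_mono m v f"
  hence "inj_mono m n (dcomp x f)" using inj_mono_comp by blast
  moreover have "set (map ((!) x) f) \<subseteq> S"
    using a inj_mono_lt[of m v f] unfolding inj_mono_def by auto
  ultimately show "map ((!) x) f \<in> {x. inj_mono m n x \<and> set x \<subseteq> S}" unfolding dcomp_def by auto
qed auto

lemma pw_sub: "precyl_W W \<Longrightarrow> W \<subseteq> arrows" unfolding precyl_W_def by (elim conjE) assumption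
lemma pw_iso: assumes "precyl_W W" "fsss X" "fsss Y" "is_iso X Y g" shows "(X, Y, g) \<in> W"
proof -
  have H: "\<forall>X Y g. fsss X \<and> fsss Y \<and> is_iso X Y g \<longrightarrow> (X, Y, g) \<in> W"
    using assms(1) unfolding precyl_W_def by (elim conjE) assumption
  show ?thesis using H assms by blast
qed
lemma pw_comp: assumes "precyl_W W" "(X, Y, g) \<in> W" "(Y, Z, h) \<in> W" shows "(X, Z, cmp X g h) \<in> W"
proof -
  have H: "\<forall>X Y Z g h. (X, Y, g) \<in> W \<and> (Y, Z, h) \<in> W \<longrightarrow> (X, Z, cmp X g h) \<in> W"
    using assms(1) unfolding precyl_W_def by (elim conjE) assumption
  show ?thesis using H assms by blast
qed
lemma pw_26: assumes "precyl_W W" "(X0, X1, h) \<in> arrows" "(X1, X2, g) \<in> arrows" "(X2, X3, f) \<in> arrows"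
        "(X0, X2, cmp X0 h g) \<in> W" "(X1, X3, cmp X1 g f) \<in> W"
  shows "(X0, X1, h) \<in> W \<and> (X1, X2, g) \<in> W \<and> (X2, X3, f) \<in> W"
proof -
  have H: "\<forall>X0 X1 X2 X3 h g f.
        (X0, X1, h) \<in> arrows \<and> (X1, X2, g) \<in> arrows \<and> (X2, X3, f) \<in> arrows \<and>
        (X0, X2, cmp X0 h g) \<in> W \<and> (X1, X3, cmp X1 g f) \<in> W \<longrightarrow>
        (X0, X1, h) \<in> W \<and> (X1, X2, g) \<in> W \<and> (X2, X3, f) \<in> W \<and>
        (X0, X3, cmp X0 (cmp X0 h g) f) \<in> W"
    using assms(1) unfolding precyl_W_def by (elim conjE) assumption
  show ?thesis using H[rule_format, of X0 X1 h X2 g X3 f] assms by blast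
qed
lemma pw_cube: "precyl_W W \<Longrightarrow>
        fsss A \<and> fsss B \<and> fsss C \<and> fsss A' \<and> fsss B' \<and> fsss C' \<and>
        is_mono A B f \<and> shom A C g \<and> is_mono A' B' f' \<and> shom A' C' g' \<and>
        (A, A', a) \<in> W \<and> (B, B', b) \<in> W \<and> (C, C', c) \<in> W \<and>
        cmp A f b = cmp A a f' \<and> cmp A g c = cmp A a g' \<and>
        is_pushout A B C f g P i j \<and> is_pushout A' B' C' f' g' P' i' j' \<and>
        shom P P' p \<and> cmp B i p = cmp B b i' \<and> cmp C j p = cmp C c j' \<Longrightarrow>
        (P, P', p) \<in> W"
proof -
  assume W: "precyl_W W" and h: "fsss A \<and> fsss B \<and> fsss C \<and> fsss A' \<and> fsss B' \<and> fsss C' \<and>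
        is_mono A B f \<and> shom A C g \<and> is_mono A' B' f' \<and> shom A' C' g' \<and>
        (A, A', a) \<in> W \<and> (B, B', b) \<in> W \<and> (C, C', c) \<in> W \<and>
        cmp A f b = cmp A a f' \<and> cmp A g c = cmp A a g' \<and>
        is_pushout A B C f g P i j \<and> is_pushout A' B' C' f' g' P' i' j' \<and>
        shom P P' p \<and> cmp B i p = cmp B b i' \<and> cmp C j p = cmp C c j'"
  have H: "\<forall>A B C f g A' B' C' f' g' a b c P i j P' i' j' p.
        fsss A \<and> fsss B \<and> fsss C \<and> fsss A' \<and> fsss B' \<and> fsss C' \<and>
        is_mono A B f \<and> shom A C g \<and> is_mono A' B' f' \<and> shom A' C' g' \<and>
        (A, A', a) \<in> W \<and> (B, B', b) \<in> W \<and> (C, C', c) \<in> W \<and>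
        cmp A f b = cmp A a f' \<and> cmp A g c = cmp A a g' \<and>
        is_pushout A B C f g P i j \<and> is_pushout A' B' C' f' g' P' i' j' \<and>
        shom P P' p \<and> cmp B i p = cmp B b i' \<and> cmp C j p = cmp C c j' \<longrightarrow>
        (P, P', p) \<in> W"
    using W unfolding precyl_W_def by (elim conjE) assumption
  show ?thesis using H[rule_format, OF h] .
qed

lemma arrowsD: "(X, Y, g) \<in> arrows \<Longrightarrow> fsss X \<and> fsss Y \<and> shom X Y g"
  unfolding arrows_def by auto

lemma arrowsI: "fsss X \<Longrightarrow> fsss Y \<Longrightarrow> shom X Y g \<Longrightarrow> (X, Y, g) \<in> arrows"
  unfolding arrows_def by auto

lemma idm_arrow: "fsss X \<Longrightarrow> (X, X, idm X) \<in> arrows"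
  by (simp add: arrowsI shom_idm)

lemma two3_i:
  assumes W: "precyl_W W" and a: "(X, Y, a) \<in> W" and ab: "(X, Z, cmp X a b) \<in> W"
    and b: "(Y, Z, b) \<in> arrows"
  shows "(Y, Z, b) \<in> W"
proof -
  have aa: "(X, Y, a) \<in> arrows" using a pw_sub[OF W] by auto
  hence "cmp X (idm X) a = a" using arrowsD cmp_idm_left by blast
  moreover have "(X, X, idm X) \<in> arrows" using aa arrowsD idm_arrow by blast
  ultimately show ?thesis using pw_26[OF W, of X X "idm X" Y a Z b] aa b a ab by simp
qed

lemma two3_ii:
  assumes W: "precyl_W W" and b: "(Y, Z, b) \<in> W" and ab: "(X, Z, cmp X a b) \<in> W"
    and a: "(X, Y, a) \<in> arrows"
  shows "(X, Y, a) \<in> W"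
proof -
  have bb: "(Y, Z, b) \<in> arrows" using b pw_sub[OF W] by auto
  hence "cmp Y b (idm Z) = b" using arrowsD cmp_idm_right by blast
  moreover have "(Z, Z, idm Z) \<in> arrows" using bb arrowsD idm_arrow by blast
  ultimately show ?thesis using pw_26[OF W, of X Y a Z b Z "idm Z"] bb b a ab by simp
qed


definition reps :: "sarrow set" where
  "reps = {(Delta m, Delta n, g) | m n g. shom (Delta m) (Delta n) g}"

lemma F_sub_D: "F n S v \<subseteq> D n v" unfolding F_def D_def by auto

lemma face_to_Delta:
  assumes W: "precyl_W W" and R: "reps \<subseteq> W"
    and S: "S \<noteq> {}" "S \<subseteq> {..n}"
  shows "(sub (F n S), Delta n, idm (sub (F n S))) \<in> W"
proof -
  define \<sigma> where "\<sigma> = sorted_list_of_set S"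
  define s where "s = card S - 1"
  have fS: "finite S" using S finite_subset by blast
  have cS: "card S > 0" using fS S by (simp add: card_gt_0_iff)
  have l\<sigma>: "length \<sigma> = Suc s" unfolding \<sigma>_def s_def using cS by simp
  have s\<sigma>: "sorted_wrt (<) \<sigma>" unfolding \<sigma>_def by (simp add: strict_sorted_list_of_set)
  have set\<sigma>: "set \<sigma> = S" unfolding \<sigma>_def using fS by simp
  have \<sigma>im: "inj_mono s n \<sigma>" unfolding inj_mono_def using l\<sigma> s\<sigma> set\<sigma> S by auto
  define \<iota> where "\<iota> = the_inv_into {..<Suc s} ((!) \<sigma>)"
  have inj: "inj_on ((!) \<sigma>) {..<Suc s}"
    using s\<sigma> l\<sigma> by (intro inj_on_nth) (auto simp: strict_sorted_iff)
  have img: "(!) \<sigma> ` {..<Suc s} = S"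
  proof -
    have "(!) \<sigma> ` {..<length \<sigma>} = set \<sigma>" by (auto simp: in_set_conv_nth)
    thus ?thesis using set\<sigma> l\<sigma> by simp
  qed
  have \<iota>_lt: "\<iota> a < Suc s" if "a \<in> S" for a
    using the_inv_into_into[OF inj, of a "{..<Suc s}"] that img unfolding \<iota>_def by auto
  have \<iota>_inv: "\<sigma> ! (\<iota> a) = a" if "a \<in> S" for a
    using f_the_inv_into_f[OF inj, of a] that img unfolding \<iota>_def by auto
  have inv_\<iota>: "\<iota> (\<sigma> ! i) = i" if "i < Suc s" for i
    using the_inv_into_f_f[OF inj, of i] that unfolding \<iota>_def by auto
  have \<iota>_mono: "\<iota> a < \<iota> b" if "a \<in> S" "b \<in> S" "a < b" for a b
  proof (rule ccontr)
    assume "\<not> \<iota> a < \<iota> b"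
    hence "\<iota> b < \<iota> a \<or> \<iota> b = \<iota> a" by auto
    thus False
    proof
      assume "\<iota> b < \<iota> a"
      hence "\<sigma> ! \<iota> b < \<sigma> ! \<iota> a" using sorted_wrt_nth_less[OF s\<sigma>] \<iota>_lt[OF that(1)] l\<sigma> by auto
      thus False using \<iota>_inv that by auto
    next
      assume "\<iota> b = \<iota> a"
      hence "\<sigma> ! \<iota> b = \<sigma> ! \<iota> a" by simp
      thus False using \<iota>_inv[OF that(1)] \<iota>_inv[OF that(2)] that(3) by simp
    qed
  qed
  define \<phi> where "\<phi> = (\<lambda>v y. if y \<in> D s v then dcomp \<sigma> y else undefined)"
  define \<psi> where "\<psi> = (\<lambda>v x. if x \<in> F n S v then map \<iota> x else undefined)"
  have \<phi>F: "dcomp \<sigma> y \<in> F n S v" if "y \<in> D s v" for y v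
  proof -
    have "inj_mono v n (dcomp \<sigma> y)" using inj_mono_comp[OF _ \<sigma>im] that unfolding D_def by auto
    moreover have "set (dcomp \<sigma> y) \<subseteq> S"
      using that inj_mono_lt[of v s y] l\<sigma> set\<sigma> unfolding D_def dcomp_def by auto
    ultimately show ?thesis unfolding F_def by auto
  qed
  have \<psi>D: "map \<iota> x \<in> D s v" if "x \<in> F n S v" for x v
  proof -
    have x: "length x = Suc v" "sorted_wrt (<) x" "set x \<subseteq> S" using that unfolding F_def inj_mono_def by auto
    have "sorted_wrt (\<lambda>a b. \<iota> a < \<iota> b) x"
      using x(3) \<iota>_mono by (intro sorted_wrt_mono_rel[OF _ x(2)]) auto
    hence "sorted_wrt (<) (map \<iota> x)" by (simp add: sorted_wrt_map)
    moreover have "\<forall>i\<in>set (map \<iota> x). i \<le> s" using x(3) \<iota>_lt by fastforce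
    ultimately show ?thesis unfolding D_def inj_mono_def using x by simp
  qed
  have s\<phi>: "shom (sub (D s)) (sub (F n S)) \<phi>"
    unfolding shom_def Simp_sub Face_sub
  proof (intro conjI allI impI)
    fix v y assume "y \<in> D s v" thus "\<phi> v y \<in> F n S v" using \<phi>F unfolding \<phi>_def by simp
  next
    fix v y assume "y \<notin> D s v" thus "\<phi> v y = undefined" unfolding \<phi>_def by simp
  next
    fix m v f y assume a: "inj_mono m v f \<and> y \<in> D s v"
    hence "dcomp y f \<in> D s m" using subcxD2[OF subcx_D] by blast
    moreover have "dcomp \<sigma> (dcomp y f) = dcomp (dcomp \<sigma> y) f"
      using dcomp_assoc a unfolding D_def by blast
    ultimately show "\<phi> m (if inj_mono m v f \<and> y \<in> D s v then dcomp y f else undefined) =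
       (if inj_mono m v f \<and> \<phi> v y \<in> F n S v then dcomp (\<phi> v y) f else undefined)"
      using a \<phi>F unfolding \<phi>_def by simp
  qed
  have s\<psi>: "shom (sub (F n S)) (sub (D s)) \<psi>"
    unfolding shom_def Simp_sub Face_sub
  proof (intro conjI allI impI)
    fix v x assume "x \<in> F n S v" thus "\<psi> v x \<in> D s v" using \<psi>D unfolding \<psi>_def by simp
  next
    fix v x assume "x \<notin> F n S v" thus "\<psi> v x = undefined" unfolding \<psi>_def by simp
  next
    fix m v f x assume a: "inj_mono m v f \<and> x \<in> F n S v"
    hence d: "dcomp x f \<in> F n S m" using subcxD2[OF subcx_F] by blast
    have lx: "length x = Suc v" using a unfolding F_def inj_mono_def by auto
    have "map \<iota> (dcomp x f) = dcomp (map \<iota> x) f"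
      using a inj_mono_lt[of m v f] lx unfolding dcomp_def by auto
    thus "\<psi> m (if inj_mono m v f \<and> x \<in> F n S v then dcomp x f else undefined) =
       (if inj_mono m v f \<and> \<psi> v x \<in> D s v then dcomp (\<psi> v x) f else undefined)"
      using a d \<psi>D unfolding \<psi>_def by simp
  qed
  have c1: "cmp (sub (D s)) \<phi> \<psi> = idm (sub (D s))"
  proof (intro ext)
    fix v y show "cmp (sub (D s)) \<phi> \<psi> v y = idm (sub (D s)) v y"
    proof (cases "y \<in> D s v")
      case True
      have "map \<iota> (dcomp \<sigma> y) = y"
        using True inj_mono_lt[of v s y] inv_\<iota> unfolding D_def dcomp_def by (simp add: map_idI)
      thus ?thesis using True \<phi>F unfolding cmp_def idm_sub \<phi>_def \<psi>_def by simp
    qed (simp add: cmp_def idm_sub)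
  qed
  have c2: "cmp (sub (F n S)) \<psi> \<phi> = idm (sub (F n S))"
  proof (intro ext)
    fix v x show "cmp (sub (F n S)) \<psi> \<phi> v x = idm (sub (F n S)) v x"
    proof (cases "x \<in> F n S v")
      case True
      have "dcomp \<sigma> (map \<iota> x) = x"
        using True \<iota>_inv unfolding F_def dcomp_def by (auto intro!: map_idI)
      thus ?thesis using True \<psi>D unfolding cmp_def idm_sub \<phi>_def \<psi>_def by simp
    qed (simp add: cmp_def idm_sub)
  qed
  have fDs: "fsss (Delta s)" using fsss_sub[OF subcx_D] Delta_sub by metis
  have fF: "fsss (sub (F n S))" using fsss_sub[OF subcx_F] .
  have fDn: "fsss (Delta n)" using fsss_sub[OF subcx_D] Delta_sub by metis
  have iso: "is_iso (Delta s) (sub (F n S)) \<phi>"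
    unfolding is_iso_def Delta_sub using s\<phi> s\<psi> c1 c2 by blast
  have w1: "(Delta s, sub (F n S), \<phi>) \<in> W" using pw_iso[OF W fDs fF iso] .
  have "shom (Delta s) (Delta n) \<phi>" unfolding Delta_sub using shom_sub_widen[OF s\<phi> F_sub_D] .
  hence w2: "(Delta s, Delta n, \<phi>) \<in> W" using R unfolding reps_def by blast
  have "cmp (Delta s) \<phi> (idm (sub (F n S))) = \<phi>" using cmp_idm_right s\<phi> Delta_sub by metis
  hence w3: "(Delta s, Delta n, cmp (Delta s) \<phi> (idm (sub (F n S)))) \<in> W" using w2 by simp
  have ar: "(sub (F n S), Delta n, idm (sub (F n S))) \<in> arrows"
    using arrowsI[OF fF fDn] shom_idm_sub[OF subcx_F F_sub_D] Delta_sub by metis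
  show ?thesis using two3_i[OF W w1 w3 ar] .
qed


lemma face_face:
  assumes W: "precyl_W W" and R: "reps \<subseteq> W"
    and T: "T \<noteq> {}" "T \<subseteq> S" and S: "S \<subseteq> {..n}"
  shows "(sub (F n T), sub (F n S), idm (sub (F n T))) \<in> W"
proof -
  have TS: "F n T v \<subseteq> F n S v" for v using T unfolding F_def by auto
  have b: "(sub (F n S), Delta n, idm (sub (F n S))) \<in> W"
    using face_to_Delta[OF W R _ S] T by auto
  have "(sub (F n T), Delta n, idm (sub (F n T))) \<in> W"
    using face_to_Delta[OF W R T(1)] T S by auto
  hence ab: "(sub (F n T), Delta n, cmp (sub (F n T)) (idm (sub (F n T))) (idm (sub (F n S)))) \<in> W"
    using cmp_idm_sub[OF TS] by simp
  have a: "(sub (F n T), sub (F n S), idm (sub (F n T))) \<in> arrows"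
    using arrowsI[OF fsss_sub[OF subcx_F] fsss_sub[OF subcx_F] shom_idm_sub[OF subcx_F TS]] .
  show ?thesis using two3_ii[OF W b ab a] .
qed

definition U :: "nat \<Rightarrow> nat set \<Rightarrow> nat set \<Rightarrow> nat \<Rightarrow> nat list set" where
  "U n S J v = {x. inj_mono v n x \<and> (\<exists>j\<in>J. set x \<subseteq> S - {j})}"

lemma subcx_U: "subcx n (U n S J)"
  unfolding subcx_def U_def
proof (intro conjI allI impI)
  fix m v f x assume a: "x \<in> {x. inj_mono v n x \<and> (\<exists>j\<in>J. set x \<subseteq> S - {j})} \<and> inj_mono m v f"
  then obtain j where j: "j \<in> J" "set x \<subseteq> S - {j}" by auto
  have "inj_mono m n (dcomp x f)" using a inj_mono_comp by blast
  moreover have "set (dcomp x f) \<subseteq> S - {j}"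
  proof -
    have "\<forall>i\<in>set f. i < length x" using a inj_mono_lt[of m v f] unfolding inj_mono_def by auto
    hence "set (dcomp x f) \<subseteq> set x" unfolding dcomp_def by auto
    thus ?thesis using j by auto
  qed
  ultimately show "dcomp x f \<in> {x. inj_mono m n x \<and> (\<exists>j\<in>J. set x \<subseteq> S - {j})}" using j by auto
qed auto

lemma U_single: "U n S {j} = F n (S - {j})"
  unfolding U_def F_def by auto

lemma U_insert: "U n S (insert j J) v = U n S J v \<union> F n (S - {j}) v"
  unfolding U_def F_def by auto

lemma U_inter: "U n (S - {j}) J v = U n S J v \<inter> F n (S - {j}) v"
  unfolding U_def F_def by auto

lemma U_F: "U n S J v \<subseteq> F n S v"
  unfolding U_def F_def by auto

lemma idm_W: "precyl_W W \<Longrightarrow> fsss X \<Longrightarrow> (X, X, idm X) \<in> W"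
  using pw_iso is_iso_idm by blast

lemma horn_gen:
  assumes W: "precyl_W W" and R: "reps \<subseteq> W"
  shows "S \<subseteq> {..n} \<Longrightarrow> J \<subseteq> S \<Longrightarrow> J \<noteq> {} \<Longrightarrow> J \<noteq> S \<Longrightarrow>
    (sub (U n S J), sub (F n S), idm (sub (U n S J))) \<in> W"
proof (induction "card S" arbitrary: S J rule: less_induct)
  case less
  have fS: "finite S" using less.prems(1) finite_subset by blast
  have fJ: "finite J" using less.prems(2) fS finite_subset by blast
  show ?case using fJ less.prems(3) less.prems(2,4)
  proof (induction J rule: finite_ne_induct)
    case (singleton j)
    have "S - {j} \<noteq> {}" using singleton by auto
    hence "(sub (F n (S - {j})), sub (F n S), idm (sub (F n (S - {j})))) \<in> W"
      using face_face[OF W R _ _ less.prems(1)] by auto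
    thus ?case by (simp add: U_single)
  next
    case (insert j J)
    define K where "K = U n S J"
    define L where "L = F n (S - {j})"
    define A where "A = U n (S - {j}) J"
    define P' where "P' = U n S (insert j J)"
    have jS: "j \<in> S" using insert by auto
    have IHJ: "(sub K, sub (F n S), idm (sub K)) \<in> W"
      unfolding K_def using insert by auto
    obtain v where v: "v \<in> S" "v \<notin> insert j J" using insert by auto
    have IHS: "(sub A, sub L, idm (sub A)) \<in> W"
      unfolding A_def L_def
    proof (rule less.hyps)
      show "card (S - {j}) < card S" using fS jS card_gt_0_iff[of S] by auto
      show "S - {j} \<subseteq> {..n}" using less.prems by auto
      show "J \<subseteq> S - {j}" using insert by auto
      show "J \<noteq> {}" using insert by auto
      show "J \<noteq> S - {j}" using v by auto
    qed
    have AI: "A x = K x \<inter> L x" for x unfolding A_def K_def L_def using U_inter by blast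
    have PU: "P' x = K x \<union> L x" for x unfolding P'_def K_def L_def using U_insert by blast
    have sA: "subcx n A" and sK: "subcx n K" and sL: "subcx n L" and sP: "subcx n P'"
      unfolding A_def K_def L_def P'_def by (auto simp: subcx_U subcx_F)
    have AK: "A x \<subseteq> K x" for x using AI by auto
    have AL: "A x \<subseteq> L x" for x using AI by auto
    have KP: "K x \<subseteq> P' x" for x using PU by auto
    have fA: "fsss (sub A)" and fK: "fsss (sub K)" and fL: "fsss (sub L)" and fP: "fsss (sub P')"
      using fsss_sub sA sK sL sP by auto
    have po1: "is_pushout (sub A) (sub K) (sub A) (idm (sub A)) (idm (sub A)) (sub K) (idm (sub K)) (idm (sub A))"
      using pushout_sub[OF sA sK sA sK] AK by blast
    have po2: "is_pushout (sub A) (sub K) (sub L) (idm (sub A)) (idm (sub A)) (sub P') (idm (sub K)) (idm (sub L))"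
      using pushout_sub[OF sA sK sL sP AI PU] .
    have eq1: "cmp (sub A) (idm (sub A)) (idm (sub K)) = cmp (sub A) (idm (sub A)) (idm (sub A))"
      using cmp_idm_sub[of A K] cmp_idm_sub[of A A] AK by auto
    have eq2: "cmp (sub A) (idm (sub A)) (idm (sub K)) = cmp (sub A) (idm (sub A)) (idm (sub L))"
      using cmp_idm_sub[of A K] cmp_idm_sub[of A L] AK AL by auto
    have KPW: "(sub K, sub P', idm (sub K)) \<in> W"
      apply (rule pw_cube[OF W, where A="sub A" and B="sub K" and C="sub A" and f="idm (sub A)"
        and g="idm (sub A)" and A'="sub A" and B'="sub K" and C'="sub L" and f'="idm (sub A)"
        and g'="idm (sub A)" and a="idm (sub A)" and b="idm (sub K)" and c="idm (sub A)"
        and i="idm (sub K)" and j="idm (sub A)" and i'="idm (sub K)" and j'="idm (sub L)"])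
      using fA fK fL is_mono_idm_sub[OF sA AK] shom_idm_sub[OF sA subset_refl] shom_idm_sub[OF sA AL] idm_W[OF W fA] idm_W[OF W fK]
        IHS eq1 eq2 po1 po2 shom_idm_sub[OF sK KP]
      by simp
    have PF: "P' x \<subseteq> F n S x" for x unfolding P'_def using U_F by blast
    have ab: "(sub K, sub (F n S), cmp (sub K) (idm (sub K)) (idm (sub P'))) \<in> W"
      using IHJ cmp_idm_sub[OF KP] by simp
    have b: "(sub P', sub (F n S), idm (sub P')) \<in> arrows"
      using arrowsI[OF fP fsss_sub[OF subcx_F] shom_idm_sub[OF sP PF]] .
    show ?case using two3_i[OF W KPW ab b] unfolding P'_def .
  qed
qed

theorem mainTheorem17:
  fixes n k :: nat
  assumes "1 \<le> n" and "k \<le> n"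
  shows "is_mono (Horn n k) (Delta n) (horn_incl n k) \<and>
         (Horn n k, Delta n, horn_incl n k) \<in> W0"
proof -
  define J where "J = {..n} - {k}"
  have hs: "horn_simp n k = U n {..n} J"
  proof (intro ext)
    fix v
    show "horn_simp n k v = U n {..n} J v"
    proof (intro set_eqI iffI)
      fix x assume "x \<in> horn_simp n k v"
      thus "x \<in> U n {..n} J v" unfolding horn_simp_def U_def J_def inj_mono_def by auto
    next
      fix x assume "x \<in> U n {..n} J v"
      thus "x \<in> horn_simp n k v" unfolding horn_simp_def U_def J_def by auto
    qed
  qed
  have HU: "Horn n k = sub (U n {..n} J)"
    unfolding Horn_def sub_def hs ..
  have DF: "Delta n = sub (F n {..n})" using Delta_sub D_F by metis
  have hi: "horn_incl n k = idm (sub (U n {..n} J))" unfolding horn_incl_def HU ..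
  have mono: "is_mono (Horn n k) (Delta n) (horn_incl n k)"
    unfolding HU DF hi using is_mono_idm_sub[OF subcx_U U_F] .
  have "(Horn n k, Delta n, horn_incl n k) \<in> W" if W: "precyl_W W" and R: "reps \<subseteq> W" for W
  proof -
    have "J \<noteq> {}" unfolding J_def using assms by (cases "k = 0") auto
    moreover have "J \<noteq> {..n}" unfolding J_def using assms by auto
    ultimately show ?thesis unfolding HU DF hi
      using horn_gen[OF W R, where S="{..n}" and J=J and n=n] unfolding J_def by auto
  qed
  hence "(Horn n k, Delta n, horn_incl n k) \<in> W0" unfolding W0_def reps_def by blast
  thus ?thesis using mono by simp
qed

end
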